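(* Let $\mu\in\mathcal{P}(\mathbb{R}^p)$, $\nu\in\mathcal{P}(\mathbb{R}^q)$, $E\subset\mathbb{R}^p$, $F\subset\mathbb{R}^q$ linear subspaces, and for a loss $L$ define $$GW_{E,F}(\mu,\nu)=\inf_{\gamma\in\Pi_{E,F}(\mu,\nu)}\iint L(x,x',y,y')\,\mathrm{d}\gamma(x,y)\,\mathrm{d}\gamma(x',y').$$ (i) If $L(x,x',y,y')=(\|x-x'\|_2^2-\|y-y'\|_2^2)^2$, then for every map $f:\mathbb{R}^p\to\mathbb{R}^p$ of the form $f(x)=(x_E,f_{E^\perp}(x_{E^\perp}))$ with $f_{E^\perp}$ an isometry of $E^\perp$ (in particular a translation or an orthogonal linear map of $E^\perp$), $GW_{E,F}(f_\#\mu,\nu)=GW_{E,F}(\mu,\nu)$; symmetrically for maps acting as an isometry on $F^\perp$ and as the identity on $F$ applied to $\nu$. (ii) If $L(x,x',y,y')=(\langle x,x'\rangle_p-\langle y,y'\rangle_q)^2$, the same invariance holds for every $f(x)=(x_E,f_{E^\perp}(x_{E^\perp}))$ with $f_{E^\perp}$ an orthogonal linear map of $E^\perp$ (and symmetrically on $F^\perp$).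
   Context: $\pi^E$ denotes orthogonal projection onto $E$, points are written $x=(x_E,x_{E^\perp})$ and $y=(y_F,y_{F^\perp})$. $\gamma^*_{E,F}$ denotes a fixed optimal plan for the Gromov–Wasserstein problem with loss $L$ between $\pi^E_\#\mu$ and $\pi^F_\#\nu$ (i.e. minimizing $\iint L\,\mathrm{d}\gamma\,\mathrm{d}\gamma$ over couplings); note $\pi^E_\#f_\#\mu=\pi^E_\#\mu$ for the maps considered. $\Pi_{E,F}(\mu,\nu)=\{\gamma\in\Pi(\mu,\nu):(\pi^E,\pi^F)_\#\gamma=\gamma^*_{E,F}\}$, where $\Pi(\mu,\nu)$ is the set of couplings of $\mu$ and $\nu$. *)

theory Defs
  imports "HOL-Analysis.Analysis" "HOL-Probability.Probability"
begin

text \<open>Orthogonal projection onto a linear subspace E (E is closed and convex, so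
  the closest point is the orthogonal projection).\<close>
definition orth_proj :: "'a::euclidean_space set \<Rightarrow> 'a \<Rightarrow> 'a" where
  "orth_proj E x = closest_point E x"

definition prob_borel :: "'a::euclidean_space measure \<Rightarrow> bool" where
  "prob_borel \<mu> \<longleftrightarrow> prob_space \<mu> \<and> sets \<mu> = sets borel"

definition couplings ::
  "'a::euclidean_space measure \<Rightarrow> 'b::euclidean_space measure \<Rightarrow> ('a \<times> 'b) measure set" where
  "couplings \<mu> \<nu> = {\<gamma>. prob_space \<gamma> \<and> sets \<gamma> = sets borel \<and>
      distr \<gamma> borel fst = \<mu> \<and> distr \<gamma> borel snd = \<nu>}"

definition gw_cost ::
  "('a \<Rightarrow> 'a \<Rightarrow> 'b \<Rightarrow> 'b \<Rightarrow> real) \<Rightarrow> ('a \<times> 'b) measure \<Rightarrow> ennreal" where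
  "gw_cost L \<gamma> = (\<integral>\<^sup>+ z. (\<integral>\<^sup>+ z'. ennreal (L (fst z) (fst z') (snd z) (snd z')) \<partial>\<gamma>) \<partial>\<gamma>)"

definition gw_optimal_plan ::
  "('a::euclidean_space \<Rightarrow> 'a \<Rightarrow> 'b::euclidean_space \<Rightarrow> 'b \<Rightarrow> real) \<Rightarrow> 'a set \<Rightarrow> 'b set \<Rightarrow>
   'a measure \<Rightarrow> 'b measure \<Rightarrow> ('a \<times> 'b) measure \<Rightarrow> bool" where
  "gw_optimal_plan L E F \<mu> \<nu> \<gamma>s \<longleftrightarrow>
     \<gamma>s \<in> couplings (distr \<mu> borel (orth_proj E)) (distr \<nu> borel (orth_proj F)) \<and>
     (\<forall>\<gamma> \<in> couplings (distr \<mu> borel (orth_proj E)) (distr \<nu> borel (orth_proj F)).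
        gw_cost L \<gamma>s \<le> gw_cost L \<gamma>)"

definition couplings_EF ::
  "'a::euclidean_space set \<Rightarrow> 'b::euclidean_space set \<Rightarrow> ('a \<times> 'b) measure \<Rightarrow>
   'a measure \<Rightarrow> 'b measure \<Rightarrow> ('a \<times> 'b) measure set" where
  "couplings_EF E F \<gamma>s \<mu> \<nu> =
     {\<gamma> \<in> couplings \<mu> \<nu>. distr \<gamma> borel (\<lambda>(x, y). (orth_proj E x, orth_proj F y)) = \<gamma>s}"

definition GW_EF ::
  "('a::euclidean_space \<Rightarrow> 'a \<Rightarrow> 'b::euclidean_space \<Rightarrow> 'b \<Rightarrow> real) \<Rightarrow> 'a set \<Rightarrow> 'b set \<Rightarrow>
   ('a \<times> 'b) measure \<Rightarrow> 'a measure \<Rightarrow> 'b measure \<Rightarrow> ennreal" where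
  "GW_EF L E F \<gamma>s \<mu> \<nu> = (INF \<gamma> \<in> couplings_EF E F \<gamma>s \<mu> \<nu>. gw_cost L \<gamma>)"

definition loss_sq :: "'a::euclidean_space \<Rightarrow> 'a \<Rightarrow> 'b::euclidean_space \<Rightarrow> 'b \<Rightarrow> real" where
  "loss_sq x x' y y' = ((norm (x - x'))\<^sup>2 - (norm (y - y'))\<^sup>2)\<^sup>2"

definition loss_inner :: "'a::euclidean_space \<Rightarrow> 'a \<Rightarrow> 'b::euclidean_space \<Rightarrow> 'b \<Rightarrow> real" where
  "loss_inner x x' y y' = (inner x x' - inner y y')\<^sup>2"

definition isometry_of :: "'a::euclidean_space set \<Rightarrow> ('a \<Rightarrow> 'a) \<Rightarrow> bool" where
  "isometry_of S g \<longleftrightarrow> g ` S = S \<and> (\<forall>u\<in>S. \<forall>v\<in>S. dist (g u) (g v) = dist u v)"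

definition orthogonal_map_of :: "'a::euclidean_space set \<Rightarrow> ('a \<Rightarrow> 'a) \<Rightarrow> bool" where
  "orthogonal_map_of S g \<longleftrightarrow> g ` S \<subseteq> S \<and>
     (\<forall>u\<in>S. \<forall>v\<in>S. g (u + v) = g u + g v) \<and> (\<forall>c. \<forall>u\<in>S. g (c *\<^sub>R u) = c *\<^sub>R g u) \<and>
     (\<forall>u\<in>S. norm (g u) = norm u)"

definition perp_map :: "'a::euclidean_space set \<Rightarrow> ('a \<Rightarrow> 'a) \<Rightarrow> 'a \<Rightarrow> 'a" where
  "perp_map E g x = orth_proj E x + g (orth_proj (orthogonal_comp E) x)"

end

theory Submission
  imports Defs
begin


lemma proj_sum:
  fixes E :: "'a::euclidean_space set"
  assumes "subspace E" "a \<in> E" "b \<in> orthogonal_comp E"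
  shows "orth_proj E (a + b) = a"
  unfolding orth_proj_def
proof (rule closest_point_unique[symmetric])
  show "convex E" using assms(1) by (rule subspace_imp_convex)
  show "closed E" using assms(1) by (rule closed_subspace)
  show "a \<in> E" by fact
  show "\<forall>z\<in>E. dist (a + b) a \<le> dist (a + b) z"
  proof
    fix z assume z: "z \<in> E"
    have az: "a - z \<in> E" using assms(1,2) z by (simp add: subspace_diff)
    have o: "orthogonal (a - z) b" using assms(3) az by (auto simp: orthogonal_comp_def)
    have "(norm b)\<^sup>2 \<le> (norm ((a - z) + b))\<^sup>2"
      using norm_add_Pythagorean[OF o] by simp
    then have "norm b \<le> norm ((a - z) + b)"
      using power2_le_imp_le by fastforce
    then show "dist (a + b) a \<le> dist (a + b) z"
      by (simp add: dist_norm algebra_simps)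
  qed
qed

lemma proj_sum2:
  fixes E :: "'a::euclidean_space set"
  assumes "subspace E" "a \<in> E" "b \<in> orthogonal_comp E"
  shows "orth_proj (orthogonal_comp E) (a + b) = b"
proof -
  have "a \<in> orthogonal_comp (orthogonal_comp E)" using assms(2) orthogonal_comp_subset by blast
  then have "orth_proj (orthogonal_comp E) (b + a) = b"
    using proj_sum[OF subspace_orthogonal_comp assms(3)] by blast
  then show ?thesis by (simp add: add.commute)
qed

lemma decomp:
  fixes E :: "'a::euclidean_space set"
  assumes "subspace E"
  obtains a b where "a \<in> E" "b \<in> orthogonal_comp E" "x = a + b"
proof -
  have "x \<in> E + orthogonal_comp E" using subspace_sum_orthogonal_comp[OF assms] by simp
  then show ?thesis using that set_plus_elim by blast
qed

lemma proj_facts: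
  fixes E :: "'a::euclidean_space set"
  assumes "subspace E"
  shows "orth_proj E x \<in> E" "orth_proj (orthogonal_comp E) x \<in> orthogonal_comp E"
    "orth_proj E x + orth_proj (orthogonal_comp E) x = x"
proof -
  obtain a b where ab: "a \<in> E" "b \<in> orthogonal_comp E" "x = a + b" using decomp[OF assms] by blast
  then show "orth_proj E x \<in> E" "orth_proj (orthogonal_comp E) x \<in> orthogonal_comp E"
    "orth_proj E x + orth_proj (orthogonal_comp E) x = x"
    using proj_sum[OF assms ab(1,2)] proj_sum2[OF assms ab(1,2)] by auto
qed

lemma norm_split:
  fixes E :: "'a::euclidean_space set"
  assumes "subspace E" "a \<in> E" "a' \<in> E" "b \<in> orthogonal_comp E" "b' \<in> orthogonal_comp E"
  shows "(norm ((a + b) - (a' + b')))\<^sup>2 = (norm (a - a'))\<^sup>2 + (norm (b - b'))\<^sup>2"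
proof -
  have "a - a' \<in> E" using assms by (simp add: subspace_diff)
  moreover have "b - b' \<in> orthogonal_comp E" using assms subspace_orthogonal_comp by (metis subspace_diff)
  ultimately have "orthogonal (a - a') (b - b')" by (auto simp: orthogonal_comp_def)
  moreover have "(a + b) - (a' + b') = (a - a') + (b - b')" by simp
  ultimately show ?thesis using norm_add_Pythagorean by metis
qed

lemma inner_split:
  fixes E :: "'a::euclidean_space set"
  assumes "subspace E" "a \<in> E" "a' \<in> E" "b \<in> orthogonal_comp E" "b' \<in> orthogonal_comp E"
  shows "inner (a + b) (a' + b') = inner a a' + inner b b'"
proof -
  have "inner a b' = 0" "inner a' b = 0" using assms by (auto simp: orthogonal_comp_def orthogonal_def)
  then show ?thesis by (simp add: inner_add inner_commute)
qed



lemma orth_proj_cont: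
  fixes E :: "'a::euclidean_space set"
  assumes "subspace E"
  shows "continuous_on UNIV (orth_proj E)"
  unfolding orth_proj_def
  apply (rule continuous_on_closest_point)
  using assms subspace_imp_convex closed_subspace subspace_0 by auto

lemma GW_mono:
  fixes \<phi> :: "'a::euclidean_space \<Rightarrow> 'a" and \<psi> :: "'b::euclidean_space \<Rightarrow> 'b"
    and L :: "'a \<Rightarrow> 'a \<Rightarrow> 'b \<Rightarrow> 'b \<Rightarrow> real"
  assumes E: "subspace E" and F: "subspace F"
    and \<phi>m: "\<phi> \<in> borel_measurable borel" and \<psi>m: "\<psi> \<in> borel_measurable borel"
    and pE: "\<And>x. orth_proj E (\<phi> x) = orth_proj E x"
    and pF: "\<And>y. orth_proj F (\<psi> y) = orth_proj F y"
    and Linv: "\<And>x x' y y'. L (\<phi> x) (\<phi> x') (\<psi> y) (\<psi> y') = L x x' y y'"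
    and Lm: "(\<lambda>(z::'a\<times>'b, z'::'a\<times>'b). L (fst z) (fst z') (snd z) (snd z')) \<in> borel_measurable (borel \<Otimes>\<^sub>M borel)"
  shows "GW_EF L E F \<gamma>s (distr \<mu> borel \<phi>) (distr \<nu> borel \<psi>) \<le> GW_EF L E F \<gamma>s \<mu> \<nu>"
  unfolding GW_EF_def
proof (rule INF_greatest)
  fix \<gamma> assume g: "\<gamma> \<in> couplings_EF E F \<gamma>s \<mu> \<nu>"
  then have ps: "prob_space \<gamma>" and sg: "sets \<gamma> = sets borel"
    and m1: "distr \<gamma> borel fst = \<mu>" and m2: "distr \<gamma> borel snd = \<nu>"
    and pp: "distr \<gamma> borel (\<lambda>(x, y). (orth_proj E x, orth_proj F y)) = \<gamma>s"
    by (auto simp: couplings_EF_def couplings_def)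
  define T where "T = (\<lambda>(x::'a, y::'b). (\<phi> x, \<psi> y))"
  have Tb: "T \<in> borel \<rightarrow>\<^sub>M borel"
    unfolding T_def borel_prod[symmetric] using \<phi>m \<psi>m by measurable
  have Tg: "T \<in> \<gamma> \<rightarrow>\<^sub>M borel"
    using Tb measurable_cong_sets[OF sg refl] by blast
  have fstm: "fst \<in> (borel :: ('a\<times>'b) measure) \<rightarrow>\<^sub>M borel"
    unfolding borel_prod[symmetric] by measurable
  have sndm: "snd \<in> (borel :: ('a\<times>'b) measure) \<rightarrow>\<^sub>M borel"
    unfolding borel_prod[symmetric] by measurable
  define P where "P = (\<lambda>(x::'a, y::'b). (orth_proj E x, orth_proj F y))"
  have Pb: "P \<in> borel \<rightarrow>\<^sub>M borel"
  proof -
    have "orth_proj E \<in> borel_measurable borel" "orth_proj F \<in> borel_measurable borel"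
      using borel_measurable_continuous_onI orth_proj_cont E F by blast+
    then show ?thesis unfolding P_def borel_prod[symmetric] by measurable
  qed
  define \<gamma>' where "\<gamma>' = distr \<gamma> borel T"
  have sg': "sets \<gamma>' = sets borel" unfolding \<gamma>'_def by simp
  have ps': "prob_space \<gamma>'" unfolding \<gamma>'_def by (rule prob_space.prob_space_distr[OF ps Tg])
  have "distr \<gamma>' borel fst = distr \<gamma> borel (fst \<circ> T)"
    unfolding \<gamma>'_def by (rule distr_distr[OF fstm Tg])
  also have "fst \<circ> T = \<phi> \<circ> fst" by (auto simp: T_def)
  also have "distr \<gamma> borel (\<phi> \<circ> fst) = distr (distr \<gamma> borel fst) borel \<phi>"
    using fstm sg by (subst distr_distr[OF \<phi>m]) (auto simp: measurable_cong_sets[OF sg refl])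
  finally have c1: "distr \<gamma>' borel fst = distr \<mu> borel \<phi>" using m1 by simp
  have "distr \<gamma>' borel snd = distr \<gamma> borel (snd \<circ> T)"
    unfolding \<gamma>'_def by (rule distr_distr[OF sndm Tg])
  also have "snd \<circ> T = \<psi> \<circ> snd" by (auto simp: T_def)
  also have "distr \<gamma> borel (\<psi> \<circ> snd) = distr (distr \<gamma> borel snd) borel \<psi>"
    using sndm sg by (subst distr_distr[OF \<psi>m]) (auto simp: measurable_cong_sets[OF sg refl])
  finally have c2: "distr \<gamma>' borel snd = distr \<nu> borel \<psi>" using m2 by simp
  have "distr \<gamma>' borel P = distr \<gamma> borel (P \<circ> T)"
    unfolding \<gamma>'_def by (rule distr_distr[OF Pb Tg])
  also have "P \<circ> T = P" by (auto simp: T_def P_def pE pF)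
  finally have c3: "distr \<gamma>' borel P = \<gamma>s" using pp by (simp add: P_def)
  have mem: "\<gamma>' \<in> couplings_EF E F \<gamma>s (distr \<mu> borel \<phi>) (distr \<nu> borel \<psi>)"
    using ps' sg' c1 c2 c3 by (auto simp: couplings_EF_def couplings_def P_def)
  define l where "l = (\<lambda>(z::'a\<times>'b) (z'::'a\<times>'b). ennreal (L (fst z) (fst z') (snd z) (snd z')))"
  have lm: "case_prod l \<in> borel_measurable (borel \<Otimes>\<^sub>M borel)"
    unfolding l_def using Lm by (simp add: case_prod_beta')
  have lm1: "l z \<in> borel_measurable borel" for z
    using measurable_Pair2[OF lm, of z] unfolding borel_prod by simp
  interpret \<gamma>: prob_space \<gamma> by (rule ps)
  have lm2: "(\<lambda>(z, w'). l z (T w')) \<in> borel_measurable (borel \<Otimes>\<^sub>M \<gamma>)"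
  proof -
    have "sets (borel \<Otimes>\<^sub>M \<gamma>) = sets (borel \<Otimes>\<^sub>M borel)"
      using sg by (intro sets_pair_measure_cong) auto
    moreover have "(\<lambda>(z, w'). l z (T w')) \<in> borel_measurable (borel \<Otimes>\<^sub>M borel)"
    proof -
      have "(\<lambda>p. (fst p, T (snd p))) \<in> (borel \<Otimes>\<^sub>M borel) \<rightarrow>\<^sub>M (borel \<Otimes>\<^sub>M borel)"
        using Tb by measurable
      from measurable_compose[OF this lm] show ?thesis by (simp add: case_prod_beta')
    qed
    ultimately show ?thesis using measurable_cong_sets by blast
  qed
  have Hm: "(\<lambda>z. \<integral>\<^sup>+ w'. l z (T w') \<partial>\<gamma>) \<in> borel_measurable borel"
    using \<gamma>.borel_measurable_nn_integral[OF lm2] .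
  have "gw_cost L \<gamma>' = (\<integral>\<^sup>+ z. (\<integral>\<^sup>+ z'. l z z' \<partial>\<gamma>') \<partial>\<gamma>')"
    by (simp add: gw_cost_def l_def)
  also have "\<dots> = (\<integral>\<^sup>+ z. (\<integral>\<^sup>+ w'. l z (T w') \<partial>\<gamma>) \<partial>\<gamma>')"
    unfolding \<gamma>'_def by (intro nn_integral_cong nn_integral_distr[OF Tg]) (simp add: lm1)
  also have "\<dots> = (\<integral>\<^sup>+ w. (\<integral>\<^sup>+ w'. l (T w) (T w') \<partial>\<gamma>) \<partial>\<gamma>)"
    unfolding \<gamma>'_def by (rule nn_integral_distr[OF Tg]) (simp add: Hm)
  also have "\<dots> = (\<integral>\<^sup>+ w. (\<integral>\<^sup>+ w'. l w w' \<partial>\<gamma>) \<partial>\<gamma>)"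
    by (auto simp: l_def T_def Linv case_prod_beta)
  also have "\<dots> = gw_cost L \<gamma>" by (simp add: gw_cost_def l_def)
  finally have "gw_cost L \<gamma>' = gw_cost L \<gamma>" .
  then show "(INF \<gamma>\<in>couplings_EF E F \<gamma>s (distr \<mu> borel \<phi>) (distr \<nu> borel \<psi>). gw_cost L \<gamma>) \<le> gw_cost L \<gamma>"
    using mem by (metis INF_lower)
qed



lemma proj_linear:
  fixes S :: "'a::euclidean_space set"
  assumes S: "subspace S"
  shows "linear (orth_proj S)"
proof (rule linearI)
  have S2: "orth_proj S x \<in> S" "orth_proj (orthogonal_comp S) x \<in> orthogonal_comp S"
    "orth_proj S x + orth_proj (orthogonal_comp S) x = x" for x
    using proj_facts[OF S] by auto
  have Sc: "subspace (orthogonal_comp S)" by (rule subspace_orthogonal_comp)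
  fix x y :: 'a and c :: real
  have "x + y = (orth_proj S x + orth_proj S y) + (orth_proj (orthogonal_comp S) x + orth_proj (orthogonal_comp S) y)"
    using S2(3)[of x] S2(3)[of y] by (simp add: algebra_simps)
  then show "orth_proj S (x + y) = orth_proj S x + orth_proj S y"
    using proj_sum[OF S] S2 S Sc by (metis subspace_add)
  have "c *\<^sub>R x = c *\<^sub>R orth_proj S x + c *\<^sub>R orth_proj (orthogonal_comp S) x"
    using S2(3)[of x] by (metis scaleR_right_distrib)
  then show "orth_proj S (c *\<^sub>R x) = c *\<^sub>R orth_proj S x"
    using proj_sum[OF S] S2 S Sc by (metis subspace_scale)
qed

definition iso0 :: "'a::euclidean_space set \<Rightarrow> ('a \<Rightarrow> 'a) \<Rightarrow> bool" where
  "iso0 S g \<longleftrightarrow> isometry_of S g \<and> g 0 = 0"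

lemma orth_map_iso0:
  fixes S :: "'a::euclidean_space set"
  assumes S: "subspace S" and g: "orthogonal_map_of S g"
  shows "iso0 S g"
proof -
  from g have gS: "g ` S \<subseteq> S" and add: "\<And>u v. u \<in> S \<Longrightarrow> v \<in> S \<Longrightarrow> g (u + v) = g u + g v"
    and sc: "\<And>c u. u \<in> S \<Longrightarrow> g (c *\<^sub>R u) = c *\<^sub>R g u" and nm: "\<And>u. u \<in> S \<Longrightarrow> norm (g u) = norm u"
    by (auto simp: orthogonal_map_of_def)
  have 0: "g 0 = 0" using sc[of 0 0] S subspace_0 by fastforce
  have diff: "g (u - v) = g u - g v" if "u \<in> S" "v \<in> S" for u v
  proof -
    have "g ((u - v) + v) = g (u - v) + g v" using that S by (intro add) (auto simp: subspace_diff)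
    then show ?thesis by simp
  qed
  have dist: "dist (g u) (g v) = dist u v" if "u \<in> S" "v \<in> S" for u v
    using diff[OF that] nm[of "u - v"] that S by (simp add: dist_norm subspace_diff)
  define G where "G = g \<circ> orth_proj S"
  have Gs: "G u = g u" if "u \<in> S" for u
    using that by (simp add: G_def orth_proj_def closest_point_self)
  have PS: "orth_proj S x \<in> S" for x using proj_facts[OF S] by auto
  have PL: "linear (orth_proj S)" by (rule proj_linear[OF S])
  have lin: "linear G"
  proof (rule linearI)
    fix x y :: 'a and c :: real
    show "G (x + y) = G x + G y"
      unfolding G_def comp_def linear_add[OF PL] by (rule add[OF PS PS])
    show "G (c *\<^sub>R x) = c *\<^sub>R G x"
      unfolding G_def comp_def linear_scale[OF PL] by (rule sc[OF PS])
  qed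
  have spS: "span S = S" using S by (simp add: span_eq_iff)
  have inj: "inj_on G (span S)"
    unfolding spS
  proof (rule inj_onI)
    fix u v assume uv: "u \<in> S" "v \<in> S" "G u = G v"
    then have "dist u v = 0" using dist[OF uv(1,2)] Gs[OF uv(1)] Gs[OF uv(2)] by simp
    then show "u = v" by simp
  qed
  have "dim (G ` S) = dim S" by (rule dim_image_eq[OF lin inj])
  moreover have GgS: "G ` S = g ` S" using Gs by (auto simp: image_def)
  moreover have "subspace (G ` S)" by (rule linear_subspace_image[OF lin S])
  ultimately have "g ` S = S"
    using subspace_dim_equal[of "g ` S" S] gS S by simp
  then show ?thesis using dist 0 by (auto simp: iso0_def isometry_of_def)
qed

lemma iso_inv:
  fixes S :: "'a::euclidean_space set"
  assumes g: "isometry_of S g"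
  shows "isometry_of S (inv_into S g)" "\<And>u. u \<in> S \<Longrightarrow> inv_into S g (g u) = u"
    "\<And>u. u \<in> S \<Longrightarrow> g (inv_into S g u) = u"
proof -
  have inj: "inj_on g S" using g by (auto simp: isometry_of_def inj_on_def) (metis dist_eq_0_iff)
  have bij: "bij_betw g S S" using g inj by (auto simp: isometry_of_def bij_betw_def)
  show i1: "\<And>u. u \<in> S \<Longrightarrow> inv_into S g (g u) = u" using inj by simp
  show i2: "\<And>u. u \<in> S \<Longrightarrow> g (inv_into S g u) = u" using g by (auto simp: isometry_of_def f_inv_into_f)
  have bi: "bij_betw (inv_into S g) S S" by (rule bij_betw_inv_into[OF bij])
  have "dist (inv_into S g u) (inv_into S g v) = dist u v" if "u \<in> S" "v \<in> S" for u v
  proof -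
    have "inv_into S g u \<in> S" "inv_into S g v \<in> S" using bi that by (auto simp: bij_betw_def)
    then show ?thesis using g i2 that by (metis isometry_of_def)
  qed
  then show "isometry_of S (inv_into S g)" using bi by (auto simp: isometry_of_def bij_betw_def)
qed

lemma iso0_inv:
  fixes S :: "'a::euclidean_space set"
  assumes S: "subspace S" and g: "iso0 S g"
  shows "iso0 S (inv_into S g)"
  using g iso_inv[of S g] S subspace_0 unfolding iso0_def by metis

lemma iso_cont:
  assumes "isometry_of S g" shows "continuous_on S g"
proof -
  have "1-lipschitz_on S g" using assms by (intro lipschitz_onI) (auto simp: isometry_of_def)
  then show ?thesis by (rule lipschitz_on_continuous_on)
qed

lemma perp_facts:
  fixes E :: "'a::euclidean_space set"
  assumes E: "subspace E" and g: "isometry_of (orthogonal_comp E) g"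
  shows "perp_map E g \<in> borel_measurable borel"
    "orth_proj E (perp_map E g x) = orth_proj E x"
    "orth_proj (orthogonal_comp E) (perp_map E g x) = g (orth_proj (orthogonal_comp E) x)"
    "perp_map E (inv_into (orthogonal_comp E) g) (perp_map E g x) = x"
    "(norm (perp_map E g x - perp_map E g x'))\<^sup>2 = (norm (x - x'))\<^sup>2"
proof -
  let ?S = "orthogonal_comp E"
  have PE: "orth_proj E x \<in> E" "orth_proj ?S x \<in> ?S" "orth_proj E x + orth_proj ?S x = x" for x
    using proj_facts[OF E] by auto
  have gS: "g u \<in> ?S" if "u \<in> ?S" for u using g that by (auto simp: isometry_of_def)
  have "continuous_on UNIV (\<lambda>x. orth_proj E x + g (orth_proj ?S x))"
    apply (intro continuous_on_add orth_proj_cont E)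
    apply (rule continuous_on_compose2[OF iso_cont[OF g] orth_proj_cont[OF subspace_orthogonal_comp]])
    using PE by auto
  then show "perp_map E g \<in> borel_measurable borel"
    unfolding perp_map_def[abs_def] by (rule borel_measurable_continuous_onI)
  show p1: "orth_proj E (perp_map E g x) = orth_proj E x" for x
    unfolding perp_map_def by (rule proj_sum[OF E PE(1) gS[OF PE(2)]])
  show p2: "orth_proj ?S (perp_map E g x) = g (orth_proj ?S x)" for x
    unfolding perp_map_def by (rule proj_sum2[OF E PE(1) gS[OF PE(2)]])
  show "perp_map E (inv_into ?S g) (perp_map E g x) = x"
    unfolding perp_map_def[of E "inv_into ?S g"] p1 p2 using iso_inv(2)[OF g PE(2)] PE(3) by simp
  have "(norm (perp_map E g x - perp_map E g x'))\<^sup>2 =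
      (norm (orth_proj E x - orth_proj E x'))\<^sup>2 + (norm (g (orth_proj ?S x) - g (orth_proj ?S x')))\<^sup>2"
    unfolding perp_map_def by (rule norm_split[OF E PE(1) PE(1) gS[OF PE(2)] gS[OF PE(2)]])
  also have "norm (g (orth_proj ?S x) - g (orth_proj ?S x')) = norm (orth_proj ?S x - orth_proj ?S x')"
    using g PE(2) by (metis isometry_of_def dist_norm)
  also have "(norm (orth_proj E x - orth_proj E x'))\<^sup>2 + (norm (orth_proj ?S x - orth_proj ?S x'))\<^sup>2
     = (norm (x - x'))\<^sup>2"
    using norm_split[OF E PE(1)[of x] PE(1)[of x'] PE(2)[of x] PE(2)[of x']] PE(3)[of x] PE(3)[of x'] by simp
  finally show "(norm (perp_map E g x - perp_map E g x'))\<^sup>2 = (norm (x - x'))\<^sup>2" .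
qed

lemma iso0_inner:
  fixes E :: "'a::euclidean_space set"
  assumes E: "subspace E" and g: "iso0 (orthogonal_comp E) g"
  shows "inner (perp_map E g x) (perp_map E g x') = inner x x'"
proof -
  let ?S = "orthogonal_comp E"
  have PE: "orth_proj E x \<in> E" "orth_proj ?S x \<in> ?S" "orth_proj E x + orth_proj ?S x = x" for x
    using proj_facts[OF E] by auto
  have gi: "isometry_of ?S g" and g0: "g 0 = 0" using g by (auto simp: iso0_def)
  have gS: "g u \<in> ?S" if "u \<in> ?S" for u using gi that by (auto simp: isometry_of_def)
  have 0: "0 \<in> ?S" by (simp add: subspace_0 subspace_orthogonal_comp)
  have nm: "norm (g u) = norm u" if "u \<in> ?S" for u
    using gi that 0 g0 by (metis isometry_of_def dist_0_norm)
  have dd: "norm (g u - g v) = norm (u - v)" if "u \<in> ?S" "v \<in> ?S" for u v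
    using gi that by (metis isometry_of_def dist_norm)
  have ip: "inner (g u) (g v) = inner u v" if "u \<in> ?S" "v \<in> ?S" for u v
  proof -
    have "(norm (g u - g v))\<^sup>2 = (norm (u - v))\<^sup>2" using dd[OF that] by simp
    then have "(norm (g u))\<^sup>2 - 2 * inner (g u) (g v) + (norm (g v))\<^sup>2 = (norm u)\<^sup>2 - 2 * inner u v + (norm v)\<^sup>2"
      by (simp add: power2_norm_eq_inner inner_diff_left inner_diff_right inner_commute)
    then show ?thesis using nm that by simp
  qed
  have "inner (perp_map E g x) (perp_map E g x') = inner (orth_proj E x) (orth_proj E x') + inner (orth_proj ?S x) (orth_proj ?S x')"
    unfolding perp_map_def using inner_split[OF E PE(1) PE(1) gS[OF PE(2)] gS[OF PE(2)]] ip PE(2) by simp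
  also have "\<dots> = inner x x'"
    using inner_split[OF E PE(1)[of x] PE(1)[of x'] PE(2)[of x] PE(2)[of x']] PE(3)[of x] PE(3)[of x'] by simp
  finally show ?thesis .
qed



lemma GW_E_side:
  fixes \<mu> :: "'a::euclidean_space measure" and \<nu> :: "'b::euclidean_space measure"
    and L :: "'a \<Rightarrow> 'a \<Rightarrow> 'b \<Rightarrow> 'b \<Rightarrow> real"
  assumes E: "subspace E" and F: "subspace F" and sm: "sets \<mu> = sets borel" and sn: "sets \<nu> = sets borel"
    and Lm: "(\<lambda>(z::'a\<times>'b, z'::'a\<times>'b). L (fst z) (fst z') (snd z) (snd z')) \<in> borel_measurable (borel \<Otimes>\<^sub>M borel)"
    and Q: "\<And>g. Q g \<Longrightarrow> isometry_of (orthogonal_comp E) g \<and> Q (inv_into (orthogonal_comp E) g)"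
    and Linv: "\<And>g x x' y y'. Q g \<Longrightarrow> L (perp_map E g x) (perp_map E g x') y y' = L x x' y y'"
    and g: "Q g"
  shows "GW_EF L E F \<gamma>s (distr \<mu> borel (perp_map E g)) \<nu> = GW_EF L E F \<gamma>s \<mu> \<nu>"
proof -
  let ?g' = "inv_into (orthogonal_comp E) g"
  have gi: "isometry_of (orthogonal_comp E) g" and g': "Q ?g'" using Q[OF g] by auto
  have gi': "isometry_of (orthogonal_comp E) ?g'" using Q[OF g'] by auto
  note pf = perp_facts[OF E gi] and pf' = perp_facts[OF E gi']
  have idm: "(\<lambda>y. y) \<in> borel_measurable borel" by simp
  have nid: "distr \<nu> borel (\<lambda>y. y) = \<nu>" using sn by (intro distr_id2) simp
  have "GW_EF L E F \<gamma>s (distr \<mu> borel (perp_map E g)) (distr \<nu> borel (\<lambda>y. y)) \<le> GW_EF L E F \<gamma>s \<mu> \<nu>"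
    by (rule GW_mono[OF E F pf(1) idm pf(2) refl Linv[OF g] Lm])
  then have le: "GW_EF L E F \<gamma>s (distr \<mu> borel (perp_map E g)) \<nu> \<le> GW_EF L E F \<gamma>s \<mu> \<nu>" by (simp add: nid)
  have "GW_EF L E F \<gamma>s (distr (distr \<mu> borel (perp_map E g)) borel (perp_map E ?g')) (distr \<nu> borel (\<lambda>y. y))
     \<le> GW_EF L E F \<gamma>s (distr \<mu> borel (perp_map E g)) \<nu>"
    by (rule GW_mono[OF E F pf'(1) idm pf'(2) refl Linv[OF g'] Lm])
  moreover have "distr (distr \<mu> borel (perp_map E g)) borel (perp_map E ?g') = \<mu>"
  proof -
    have "distr (distr \<mu> borel (perp_map E g)) borel (perp_map E ?g') = distr \<mu> borel (perp_map E ?g' \<circ> perp_map E g)"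
      using pf(1) sm by (intro distr_distr[OF pf'(1)]) (simp add: measurable_cong_sets[OF sm refl])
    also have "perp_map E ?g' \<circ> perp_map E g = (\<lambda>x. x)" using pf(4) by (auto simp: fun_eq_iff)
    also have "distr \<mu> borel (\<lambda>x. x) = \<mu>" using sm by (intro distr_id2) simp
    finally show ?thesis .
  qed
  ultimately have "GW_EF L E F \<gamma>s \<mu> \<nu> \<le> GW_EF L E F \<gamma>s (distr \<mu> borel (perp_map E g)) \<nu>" by (simp add: nid)
  with le show ?thesis by (rule antisym)
qed

lemma GW_F_side:
  fixes \<mu> :: "'a::euclidean_space measure" and \<nu> :: "'b::euclidean_space measure"
    and L :: "'a \<Rightarrow> 'a \<Rightarrow> 'b \<Rightarrow> 'b \<Rightarrow> real"
  assumes E: "subspace E" and F: "subspace F" and sm: "sets \<mu> = sets borel" and sn: "sets \<nu> = sets borel"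
    and Lm: "(\<lambda>(z::'a\<times>'b, z'::'a\<times>'b). L (fst z) (fst z') (snd z) (snd z')) \<in> borel_measurable (borel \<Otimes>\<^sub>M borel)"
    and Q: "\<And>g. Q g \<Longrightarrow> isometry_of (orthogonal_comp F) g \<and> Q (inv_into (orthogonal_comp F) g)"
    and Linv: "\<And>g x x' y y'. Q g \<Longrightarrow> L x x' (perp_map F g y) (perp_map F g y') = L x x' y y'"
    and g: "Q g"
  shows "GW_EF L E F \<gamma>s \<mu> (distr \<nu> borel (perp_map F g)) = GW_EF L E F \<gamma>s \<mu> \<nu>"
proof -
  let ?g' = "inv_into (orthogonal_comp F) g"
  have gi: "isometry_of (orthogonal_comp F) g" and g': "Q ?g'" using Q[OF g] by auto
  have gi': "isometry_of (orthogonal_comp F) ?g'" using Q[OF g'] by auto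
  note pf = perp_facts[OF F gi] and pf' = perp_facts[OF F gi']
  have idm: "(\<lambda>y. y) \<in> borel_measurable borel" by simp
  have nid: "distr \<mu> borel (\<lambda>y. y) = \<mu>" using sm by (intro distr_id2) simp
  have "GW_EF L E F \<gamma>s (distr \<mu> borel (\<lambda>y. y)) (distr \<nu> borel (perp_map F g)) \<le> GW_EF L E F \<gamma>s \<mu> \<nu>"
    by (rule GW_mono[OF E F idm pf(1) refl pf(2) Linv[OF g] Lm])
  then have le: "GW_EF L E F \<gamma>s \<mu> (distr \<nu> borel (perp_map F g)) \<le> GW_EF L E F \<gamma>s \<mu> \<nu>" by (simp add: nid)
  have "GW_EF L E F \<gamma>s (distr \<mu> borel (\<lambda>y. y)) (distr (distr \<nu> borel (perp_map F g)) borel (perp_map F ?g'))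
     \<le> GW_EF L E F \<gamma>s \<mu> (distr \<nu> borel (perp_map F g))"
    by (rule GW_mono[OF E F idm pf'(1) refl pf'(2) Linv[OF g'] Lm])
  moreover have "distr (distr \<nu> borel (perp_map F g)) borel (perp_map F ?g') = \<nu>"
  proof -
    have "distr (distr \<nu> borel (perp_map F g)) borel (perp_map F ?g') = distr \<nu> borel (perp_map F ?g' \<circ> perp_map F g)"
      using pf(1) sn by (intro distr_distr[OF pf'(1)]) (simp add: measurable_cong_sets[OF sn refl])
    also have "perp_map F ?g' \<circ> perp_map F g = (\<lambda>x. x)" using pf(4) by (auto simp: fun_eq_iff)
    also have "distr \<nu> borel (\<lambda>x. x) = \<nu>" using sn by (intro distr_id2) simp
    finally show ?thesis .
  qed
  ultimately have "GW_EF L E F \<gamma>s \<mu> \<nu> \<le> GW_EF L E F \<gamma>s \<mu> (distr \<nu> borel (perp_map F g))" by (simp add: nid)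
  with le show ?thesis by (rule antisym)
qed

lemma Lm_sq: "(\<lambda>(z::'a::euclidean_space\<times>'b::euclidean_space, z'::'a\<times>'b). loss_sq (fst z) (fst z') (snd z) (snd z')) \<in> borel_measurable (borel \<Otimes>\<^sub>M borel)"
  unfolding borel_prod loss_sq_def case_prod_beta
  by (intro borel_measurable_continuous_onI continuous_intros)

lemma Lm_inner: "(\<lambda>(z::'a::euclidean_space\<times>'b::euclidean_space, z'::'a\<times>'b). loss_inner (fst z) (fst z') (snd z) (snd z')) \<in> borel_measurable (borel \<Otimes>\<^sub>M borel)"
  unfolding borel_prod loss_inner_def case_prod_beta
  by (intro borel_measurable_continuous_onI continuous_intros)

theorem proposition2:
  fixes \<mu> :: "'a::euclidean_space measure" and \<nu> :: "'b::euclidean_space measure"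
    and E :: "'a set" and F :: "'b set"
    and \<gamma>1 \<gamma>2 :: "('a \<times> 'b) measure"
  assumes "prob_borel \<mu>" and "prob_borel \<nu>"
    and "subspace E" and "subspace F"
    and opt1: "gw_optimal_plan loss_sq E F \<mu> \<nu> \<gamma>1"
    and opt2: "gw_optimal_plan loss_inner E F \<mu> \<nu> \<gamma>2"
  shows
    "(\<forall>g. isometry_of (orthogonal_comp E) g \<longrightarrow>
        GW_EF loss_sq E F \<gamma>1 (distr \<mu> borel (perp_map E g)) \<nu> = GW_EF loss_sq E F \<gamma>1 \<mu> \<nu>) \<and>
     (\<forall>h. isometry_of (orthogonal_comp F) h \<longrightarrow>
        GW_EF loss_sq E F \<gamma>1 \<mu> (distr \<nu> borel (perp_map F h)) = GW_EF loss_sq E F \<gamma>1 \<mu> \<nu>) \<and>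
     (\<forall>g. orthogonal_map_of (orthogonal_comp E) g \<longrightarrow>
        GW_EF loss_inner E F \<gamma>2 (distr \<mu> borel (perp_map E g)) \<nu> = GW_EF loss_inner E F \<gamma>2 \<mu> \<nu>) \<and>
     (\<forall>h. orthogonal_map_of (orthogonal_comp F) h \<longrightarrow>
        GW_EF loss_inner E F \<gamma>2 \<mu> (distr \<nu> borel (perp_map F h)) = GW_EF loss_inner E F \<gamma>2 \<mu> \<nu>)"
proof -
  have E: "subspace E" and F: "subspace F" by fact+
  have sm: "sets \<mu> = sets borel" and sn: "sets \<nu> = sets borel"
    using assms(1,2) by (auto simp: prob_borel_def)
  have SE: "subspace (orthogonal_comp E)" and SF: "subspace (orthogonal_comp F)"
    by (rule subspace_orthogonal_comp)+
  have i1: "GW_EF loss_sq E F \<gamma>1 (distr \<mu> borel (perp_map E g)) \<nu> = GW_EF loss_sq E F \<gamma>1 \<mu> \<nu>"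
    if "isometry_of (orthogonal_comp E) g" for g
    by (rule GW_E_side[OF E F sm sn Lm_sq, where Q="isometry_of (orthogonal_comp E)"])
       (auto simp: iso_inv loss_sq_def perp_facts[OF E] that)
  have i2: "GW_EF loss_sq E F \<gamma>1 \<mu> (distr \<nu> borel (perp_map F h)) = GW_EF loss_sq E F \<gamma>1 \<mu> \<nu>"
    if "isometry_of (orthogonal_comp F) h" for h
    by (rule GW_F_side[OF E F sm sn Lm_sq, where Q="isometry_of (orthogonal_comp F)"])
       (auto simp: iso_inv loss_sq_def perp_facts[OF F] that)
  have i3: "GW_EF loss_inner E F \<gamma>2 (distr \<mu> borel (perp_map E g)) \<nu> = GW_EF loss_inner E F \<gamma>2 \<mu> \<nu>"
    if "orthogonal_map_of (orthogonal_comp E) g" for g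
    by (rule GW_E_side[OF E F sm sn Lm_inner, where Q="iso0 (orthogonal_comp E)"])
       (auto simp: loss_inner_def iso0_inner[OF E] orth_map_iso0[OF SE that] intro: iso0_inv[OF SE] dest: iso0_def[THEN iffD1])
  have i4: "GW_EF loss_inner E F \<gamma>2 \<mu> (distr \<nu> borel (perp_map F h)) = GW_EF loss_inner E F \<gamma>2 \<mu> \<nu>"
    if "orthogonal_map_of (orthogonal_comp F) h" for h
    by (rule GW_F_side[OF E F sm sn Lm_inner, where Q="iso0 (orthogonal_comp F)"])
       (auto simp: loss_inner_def iso0_inner[OF F] orth_map_iso0[OF SF that] intro: iso0_inv[OF SF] dest: iso0_def[THEN iffD1])
  show ?thesis using i1 i2 i3 i4 by blast
qed

end
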